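(* Let $\eta^{(\varepsilon)}(t)$, $\varepsilon\in(0,1]$, be semi-Markov processes on $\mathbb{X}=\{1,\dots,N\}$ built from Markov renewal processes as in the context, satisfying condition A of the context and conditions B and C of the context for some $\varepsilon_0\in(0,1]$. Fix $r\in\mathbb{X}$, assume $\mathsf P\{\eta^{(\varepsilon)}_0=r\}=0$, and let $_r\eta^{(\varepsilon)}(t)$ be the reduced semi-Markov process on $_r\mathbb{X}=\mathbb{X}\setminus\{r\}$ with transition probabilities $_rQ^{(\varepsilon)}_{ij}(t)$ and expectations $_re_{ij}(\varepsilon)=\int_0^\infty t\,{}_rQ^{(\varepsilon)}_{ij}(dt)$. Then conditions B and C hold for $_r\eta^{(\varepsilon)}(t)$: $_rQ^{(\varepsilon)}_{ij}(0)=0$ and $_re_{ij}(\varepsilon)<\infty$ for all $i,j\in{}_r\mathbb{X}$, $\varepsilon\in(0,\varepsilon_0]$.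
   Context: For $\varepsilon\in(0,1]$, $(\eta^{(\varepsilon)}_n,\kappa^{(\varepsilon)}_n)$, $n\ge0$, is a homogeneous Markov chain on $\mathbb{X}\times[0,\infty)$, $\kappa^{(\varepsilon)}_0=0$, with transition probabilities $Q^{(\varepsilon)}_{ij}(t)=\mathsf P\{\eta^{(\varepsilon)}_1=j,\kappa^{(\varepsilon)}_1\le t\mid\eta^{(\varepsilon)}_0=i,\kappa^{(\varepsilon)}_0=s\}$ not depending on $s$; $p_{ij}(\varepsilon)=Q^{(\varepsilon)}_{ij}(\infty)$; $e_{ij}(\varepsilon)=\int_0^\infty t\,Q^{(\varepsilon)}_{ij}(dt)$; the semi-Markov process is $\eta^{(\varepsilon)}(t)=\eta^{(\varepsilon)}_{\nu^{(\varepsilon)}(t)}$, $\nu^{(\varepsilon)}(t)=\max\{n\ge0:\kappa^{(\varepsilon)}_1+\dots+\kappa^{(\varepsilon)}_n\le t\}$. Condition A: there exist $\mathbb{Y}_i\subseteq\mathbb{X}$ and $\varepsilon_0\in(0,1]$ such that for $\varepsilon\in(0,\varepsilon_0]$: $p_{ij}(\varepsilon)>0$ for $j\in\mathbb{Y}_i$, $p_{ij}(\varepsilon)=0$ for $j\notin\mathbb{Y}_i$, and for every $i,j$ there exist $n\ge1$, $i=l_0,\dots,l_n=j$ with $l_{k+1}\in\mathbb{Y}_{l_k}$. Condition B: $Q^{(\varepsilon)}_{ij}(0)=0$ for all $i,j$, $\varepsilon\in(0,\varepsilon_0]$. Condition C: $e_{ij}(\varepsilon)<\infty$ for all $i,j$,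 $\varepsilon\in(0,\varepsilon_0]$. Reduced process: $_r\xi_0=0$, $_r\xi_n=\min\{k>{}_r\xi_{n-1}:\eta^{(\varepsilon)}_k\in{}_r\mathbb{X}\}$, $_r\eta^{(\varepsilon)}_n=\eta^{(\varepsilon)}_{_r\xi_n}$, $_r\kappa^{(\varepsilon)}_0=0$, $_r\kappa^{(\varepsilon)}_n=\sum_{k={}_r\xi_{n-1}+1}^{_r\xi_n}\kappa^{(\varepsilon)}_k$; this is a Markov renewal process on $_r\mathbb{X}\times[0,\infty)$ with transition probabilities $_rQ^{(\varepsilon)}_{ij}(t)=\mathsf P\{{}_r\eta^{(\varepsilon)}_1=j,{}_r\kappa^{(\varepsilon)}_1\le t\mid{}_r\eta^{(\varepsilon)}_0=i\}$, and $_r\eta^{(\varepsilon)}(t)$ is its semi-Markov process. *)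

theory Defs
  imports "HOL-Probability.Probability"
begin

text \<open>K eps i j is the (sub-probability) measure on the real line with
  distribution function Q_ij(t) = measure (K eps i j) {..t};
  p_ij(eps) = Q_ij(infinity) = measure (K eps i j) UNIV.\<close>

definition semi_markov_kernel ::
  "nat \<Rightarrow> (real \<Rightarrow> nat \<Rightarrow> nat \<Rightarrow> real measure) \<Rightarrow> bool" where
  "semi_markov_kernel N K \<longleftrightarrow>
     (\<forall>\<epsilon>\<in>{0<..1}. \<forall>i\<in>{1..N}. \<forall>j\<in>{1..N}.
        sets (K \<epsilon> i j) = sets borel \<and> finite_measure (K \<epsilon> i j) \<and>
        emeasure (K \<epsilon> i j) {..<0} = 0) \<and>
     (\<forall>\<epsilon>\<in>{0<..1}. \<forall>i\<in>{1..N}. (\<Sum>j\<in>{1..N}. measure (K \<epsilon> i j) UNIV) = 1)"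

definition trans_prob :: "(real \<Rightarrow> nat \<Rightarrow> nat \<Rightarrow> real measure) \<Rightarrow> real \<Rightarrow> nat \<Rightarrow> nat \<Rightarrow> real" where
  "trans_prob K \<epsilon> i j = measure (K \<epsilon> i j) UNIV"

definition Qdf :: "(real \<Rightarrow> nat \<Rightarrow> nat \<Rightarrow> real measure) \<Rightarrow> real \<Rightarrow> nat \<Rightarrow> nat \<Rightarrow> real \<Rightarrow> real" where
  "Qdf K \<epsilon> i j t = measure (K \<epsilon> i j) {..t}"

definition expect :: "(real \<Rightarrow> nat \<Rightarrow> nat \<Rightarrow> real measure) \<Rightarrow> real \<Rightarrow> nat \<Rightarrow> nat \<Rightarrow> ennreal" where
  "expect K \<epsilon> i j = (\<integral>\<^sup>+ t. ennreal t \<partial>K \<epsilon> i j)"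

definition condA :: "nat \<Rightarrow> (real \<Rightarrow> nat \<Rightarrow> nat \<Rightarrow> real measure) \<Rightarrow> real \<Rightarrow> bool" where
  "condA N K \<epsilon>0 \<longleftrightarrow> (\<exists>Y :: nat \<Rightarrow> nat set.
     (\<forall>i\<in>{1..N}. Y i \<subseteq> {1..N}) \<and>
     (\<forall>\<epsilon>\<in>{0<..\<epsilon>0}. \<forall>i\<in>{1..N}. \<forall>j\<in>{1..N}.
        (j \<in> Y i \<longrightarrow> trans_prob K \<epsilon> i j > 0) \<and> (j \<notin> Y i \<longrightarrow> trans_prob K \<epsilon> i j = 0)) \<and>
     (\<forall>i\<in>{1..N}. \<forall>j\<in>{1..N}. \<exists>n\<ge>1. \<exists>l :: nat \<Rightarrow> nat.
        l 0 = i \<and> l n = j \<and> (\<forall>k<n. l (Suc k) \<in> Y (l k))))"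

definition condB :: "nat \<Rightarrow> (real \<Rightarrow> nat \<Rightarrow> nat \<Rightarrow> real measure) \<Rightarrow> real \<Rightarrow> bool" where
  "condB N K \<epsilon>0 \<longleftrightarrow> (\<forall>\<epsilon>\<in>{0<..\<epsilon>0}. \<forall>i\<in>{1..N}. \<forall>j\<in>{1..N}. Qdf K \<epsilon> i j 0 = 0)"

definition condC :: "nat \<Rightarrow> (real \<Rightarrow> nat \<Rightarrow> nat \<Rightarrow> real measure) \<Rightarrow> real \<Rightarrow> bool" where
  "condC N K \<epsilon>0 \<longleftrightarrow> (\<forall>\<epsilon>\<in>{0<..\<epsilon>0}. \<forall>i\<in>{1..N}. \<forall>j\<in>{1..N}. expect K \<epsilon> i j < \<infinity>)"

text \<open>The event {r_eta_1 = j, r_kappa_1 in A} given eta_0 = i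
  (i, j distinct from r) is the disjoint union over n >= 1 of the events
  {eta_1 = ... = eta_(n-1) = r, eta_n = j, kappa_1+...+kappa_n in A}.
  By the finite-dimensional distributions of the Markov renewal process,
  P{eta_1 = s_1, kappa_1 in A_1, ..., eta_n = s_n, kappa_n in A_n | eta_0 = s_0}
    = prod_k Q_(s_(k-1) s_k)(A_k),
  i.e. the joint law of (kappa_1..kappa_n) on the event that the states are s
  is the product measure of the kernels K (s_(k-1)) (s_k).\<close>

definition taboo_path :: "nat \<Rightarrow> nat \<Rightarrow> nat \<Rightarrow> nat \<Rightarrow> nat \<Rightarrow> nat" where
  "taboo_path i r j n k = (if k = 0 then i else if k < n then r else j)"

definition taboo_law ::
  "(real \<Rightarrow> nat \<Rightarrow> nat \<Rightarrow> real measure) \<Rightarrow> real \<Rightarrow> nat \<Rightarrow> nat \<Rightarrow> nat \<Rightarrow> nat \<Rightarrow> (nat \<Rightarrow> real) measure" where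
  "taboo_law K \<epsilon> r i j n =
     PiM {1..n} (\<lambda>k. K \<epsilon> (taboo_path i r j n (k - 1)) (taboo_path i r j n k))"

text \<open>rQ_ij(t) = P{r_eta_1 = j, r_kappa_1 <= t | r_eta_0 = i}.\<close>
definition red_Q ::
  "(real \<Rightarrow> nat \<Rightarrow> nat \<Rightarrow> real measure) \<Rightarrow> nat \<Rightarrow> real \<Rightarrow> nat \<Rightarrow> nat \<Rightarrow> real \<Rightarrow> ennreal" where
  "red_Q K r \<epsilon> i j t =
     (\<Sum>m. emeasure (taboo_law K \<epsilon> r i j (Suc m))
            {x \<in> space (taboo_law K \<epsilon> r i j (Suc m)). (\<Sum>k\<in>{1..Suc m}. x k) \<le> t})"

text \<open>re_ij = int_0^infinity t rQ_ij(dt) = E[r_kappa_1 ; r_eta_1 = j | r_eta_0 = i].\<close>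
definition red_e ::
  "(real \<Rightarrow> nat \<Rightarrow> nat \<Rightarrow> real measure) \<Rightarrow> nat \<Rightarrow> real \<Rightarrow> nat \<Rightarrow> nat \<Rightarrow> ennreal" where
  "red_e K r \<epsilon> i j =
     (\<Sum>m. \<integral>\<^sup>+ x. ennreal (\<Sum>k\<in>{1..Suc m}. x k) \<partial>taboo_law K \<epsilon> r i j (Suc m))"

end

theory Submission
  imports Defs
begin

lemma ennreal_add_le: "ennreal (a + b) \<le> ennreal a + ennreal b"
proof (cases "a < 0")
  case True
  then have "ennreal (a + b) \<le> ennreal b" by (intro ennreal_leI) simp
  then show ?thesis using True by (simp add: ennreal_neg)
next
  case False
  show ?thesis
  proof (cases "b < 0")
    case True
    then have "ennreal (a + b) \<le> ennreal a" by (intro ennreal_leI) simp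
    then show ?thesis using True by (simp add: ennreal_neg)
  next
    case False
    then show ?thesis using \<open>\<not> a < 0\<close> by (simp add: ennreal_plus)
  qed
qed

lemma ennreal_sum_le: "finite I \<Longrightarrow> ennreal (\<Sum>k\<in>I. f k) \<le> (\<Sum>k\<in>I. ennreal (f k))"
proof (induction I rule: finite_induct)
  case empty then show ?case by simp
next
  case (insert a I)
  have "ennreal (f a + (\<Sum>k\<in>I. f k)) \<le> ennreal (f a) + ennreal (\<Sum>k\<in>I. f k)"
    by (rule ennreal_add_le)
  also have "\<dots> \<le> ennreal (f a) + (\<Sum>k\<in>I. ennreal (f k))" using insert by (simp add: add_left_mono)
  finally show ?case using insert by simp
qed

lemma PiM_zero:
  fixes M :: "nat \<Rightarrow> real measure"
  assumes ps: "product_sigma_finite M" and fin: "finite I" and ne: "I \<noteq> {}"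
    and sets: "\<And>k. sets (M k) = sets borel"
    and z: "\<And>k. k \<in> I \<Longrightarrow> emeasure (M k) {..0} = 0"
  shows "emeasure (PiM I M) {x \<in> space (PiM I M). (\<Sum>k\<in>I. x k) \<le> 0} = 0"
proof -
  interpret product_sigma_finite M by (rule ps)
  have sp: "\<And>k. space (M k) = UNIV" using sets by (metis sets_eq_imp_space_eq space_borel)
  define A where "A k = PiE I (\<lambda>l. if l = k then {..0::real} else UNIV)" for k
  have A0: "emeasure (PiM I M) (A k) = 0" if "k \<in> I" for k
  proof -
    have "emeasure (PiM I M) (A k) = (\<Prod>l\<in>I. emeasure (M l) (if l = k then {..0} else UNIV))"
      unfolding A_def by (rule emeasure_PiM[OF fin]) (simp add: sets)
    also have "\<dots> = 0" using that fin z by (intro prod_zero) auto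
    finally show ?thesis .
  qed
  have Asets: "A k \<in> sets (PiM I M)" for k
    unfolding A_def by (rule sets_PiM_I_finite[OF fin]) (simp add: sets)
  have sub: "{x \<in> space (PiM I M). (\<Sum>k\<in>I. x k) \<le> 0} \<subseteq> (\<Union>k\<in>I. A k)"
  proof
    fix x assume x: "x \<in> {x \<in> space (PiM I M). (\<Sum>k\<in>I. x k) \<le> 0}"
    then have xs: "x \<in> PiE I (\<lambda>_. UNIV)" by (simp add: space_PiM sp)
    have "\<exists>k\<in>I. x k \<le> 0"
    proof (rule ccontr)
      assume "\<not> ?thesis"
      then have "(\<Sum>k\<in>I. x k) > 0" using fin ne by (intro sum_pos) auto
      with x show False by simp
    qed
    then obtain k where "k \<in> I" "x k \<le> 0" by auto
    then show "x \<in> (\<Union>k\<in>I. A k)" using xs unfolding A_def by (auto simp: PiE_iff)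
  qed
  have "(\<Union>k\<in>I. A k) \<in> null_sets (PiM I M)"
    using fin A0 Asets by (intro null_sets.finite_UN) (auto simp: null_sets_def)
  then have "emeasure (PiM I M) (\<Union>k\<in>I. A k) = 0" by auto
  moreover have "(\<Union>k\<in>I. A k) \<in> sets (PiM I M)" using fin Asets by auto
  ultimately have "emeasure (PiM I M) {x \<in> space (PiM I M). (\<Sum>k\<in>I. x k) \<le> 0} \<le> 0"
    using emeasure_mono[OF sub, of "PiM I M"] by simp
  then show ?thesis by simp
qed

lemma PiM_component_integral:
  fixes M :: "nat \<Rightarrow> real measure"
  assumes ps: "product_sigma_finite M" and fin: "finite I" and k: "k \<in> I"
    and sets: "\<And>k. sets (M k) = sets borel"
  shows "(\<integral>\<^sup>+ x. ennreal (x k) \<partial>PiM I M) = (\<integral>\<^sup>+ t. ennreal t \<partial>M k) * (\<Prod>l\<in>I-{k}. emeasure (M l) UNIV)"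
proof -
  interpret product_sigma_finite M by (rule ps)
  have sp: "\<And>k. space (M k) = UNIV" using sets by (metis sets_eq_imp_space_eq space_borel)
  define f where "f l = (if l = k then (\<lambda>t. ennreal t) else (\<lambda>_. 1))" for l
  have "(\<integral>\<^sup>+ x. ennreal (x k) \<partial>PiM I M) = (\<integral>\<^sup>+ x. (\<Prod>l\<in>I. f l (x l)) \<partial>PiM I M)"
  proof (intro nn_integral_cong)
    fix x
    have "(\<Prod>l\<in>I. f l (x l)) = (\<Prod>l\<in>I. if l = k then ennreal (x k) else 1)"
      by (intro prod.cong) (auto simp: f_def)
    also have "\<dots> = ennreal (x k)" using prod.delta[OF fin, of k "\<lambda>_. ennreal (x k)"] k by simp
    finally show "ennreal (x k) = (\<Prod>l\<in>I. f l (x l))" by simp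
  qed
  also have "\<dots> = (\<Prod>l\<in>I. integral\<^sup>N (M l) (f l))"
    by (rule product_nn_integral_prod[OF fin]) (auto simp: f_def measurable_cong_sets[OF sets refl])
  also have "\<dots> = integral\<^sup>N (M k) (f k) * (\<Prod>l\<in>I-{k}. integral\<^sup>N (M l) (f l))"
    using fin k by (simp add: prod.remove)
  also have "(\<Prod>l\<in>I-{k}. integral\<^sup>N (M l) (f l)) = (\<Prod>l\<in>I-{k}. emeasure (M l) UNIV)"
    by (intro prod.cong) (auto simp: f_def sp)
  finally show ?thesis by (simp add: f_def)
qed

theorem lemma7:
  fixes N :: nat and K :: "real \<Rightarrow> nat \<Rightarrow> nat \<Rightarrow> real measure"
    and init :: "real \<Rightarrow> nat \<Rightarrow> real" and \<epsilon>0 :: real and r :: nat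
  assumes "N \<ge> 1"
    and "semi_markov_kernel N K"
    and "\<forall>\<epsilon>\<in>{0<..1}. (\<forall>i\<in>{1..N}. init \<epsilon> i \<ge> 0) \<and> (\<Sum>i\<in>{1..N}. init \<epsilon> i) = 1"
    and "0 < \<epsilon>0" and "\<epsilon>0 \<le> 1"
    and "condA N K \<epsilon>0" and "condB N K \<epsilon>0" and "condC N K \<epsilon>0"
    and "r \<in> {1..N}"
    and "\<forall>\<epsilon>\<in>{0<..1}. init \<epsilon> r = 0"
  shows "\<forall>\<epsilon>\<in>{0<..\<epsilon>0}. \<forall>i\<in>{1..N} - {r}. \<forall>j\<in>{1..N} - {r}.
           red_Q K r \<epsilon> i j 0 = 0 \<and> red_e K r \<epsilon> i j < \<infinity>"
proof (intro ballI)
  fix \<epsilon> i j assume eps: "\<epsilon> \<in> {0<..\<epsilon>0}" and i: "i \<in> {1..N} - {r}" and j: "j \<in> {1..N} - {r}"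
  have eps1: "\<epsilon> \<in> {0<..1}" using eps assms(5) by auto
  have rN: "r \<in> {1..N}" using assms(9) .
  have kern: "\<And>a b. a \<in> {1..N} \<Longrightarrow> b \<in> {1..N} \<Longrightarrow> sets (K \<epsilon> a b) = sets borel \<and> finite_measure (K \<epsilon> a b) \<and> emeasure (K \<epsilon> a b) {..<0} = 0"
    using assms(2) eps1 unfolding semi_markov_kernel_def by blast
  have rowsum: "\<And>a. a \<in> {1..N} \<Longrightarrow> (\<Sum>b\<in>{1..N}. measure (K \<epsilon> a b) UNIV) = 1"
    using assms(2) eps1 unfolding semi_markov_kernel_def by blast
  have le1: "measure (K \<epsilon> a b) UNIV \<le> 1" if a: "a \<in> {1..N}" and b: "b \<in> {1..N}" for a b
  proof -
    have "measure (K \<epsilon> a b) UNIV \<le> (\<Sum>b\<in>{1..N}. measure (K \<epsilon> a b) UNIV)"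
      by (rule member_le_sum) (use b in auto)
    then show ?thesis using rowsum[OF a] by simp
  qed
  have emeq: "\<And>a b A. a \<in> {1..N} \<Longrightarrow> b \<in> {1..N} \<Longrightarrow> emeasure (K \<epsilon> a b) A = ennreal (measure (K \<epsilon> a b) A)"
    using kern finite_measure.emeasure_eq_measure by blast
  define M where "M n k = K \<epsilon> (taboo_path i r j n (k - 1)) (taboo_path i r j n k)" for n k
  have pathN: "\<And>n k. taboo_path i r j n k \<in> {1..N}" using i j rN by (auto simp: taboo_path_def)
  have Mk: "\<And>n k. sets (M n k) = sets borel \<and> finite_measure (M n k) \<and> emeasure (M n k) {..<0} = 0"
    unfolding M_def using kern pathN by blast
  have Mem: "\<And>n k. emeasure (M n k) UNIV = ennreal (measure (M n k) UNIV) \<and> measure (M n k) UNIV \<le> 1"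
    unfolding M_def using emeq le1 pathN by blast
  have ps: "\<And>n. product_sigma_finite (M n)"
    unfolding product_sigma_finite_def using Mk finite_measure_def by blast
  have law: "\<And>n. taboo_law K \<epsilon> r i j n = PiM {1..n} (M n)" by (simp add: taboo_law_def M_def[abs_def])
  have Q0: "red_Q K r \<epsilon> i j 0 = 0"
  proof -
    have "emeasure (taboo_law K \<epsilon> r i j (Suc m)) {x \<in> space (taboo_law K \<epsilon> r i j (Suc m)). (\<Sum>k\<in>{1..Suc m}. x k) \<le> 0} = 0" for m
    proof -
      have z: "emeasure (M (Suc m) k) {..0} = 0" for k
      proof -
        have "Qdf K \<epsilon> (taboo_path i r j (Suc m) (k-1)) (taboo_path i r j (Suc m) k) 0 = 0"
          using assms(7) eps pathN unfolding condB_def by blast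
        then have "measure (M (Suc m) k) {..0} = 0" by (simp add: Qdf_def M_def)
        then show ?thesis using Mk finite_measure.emeasure_eq_measure by (metis ennreal_0)
      qed
      show ?thesis unfolding law by (rule PiM_zero[OF ps]) (auto simp: z Mk)
    qed
    then show ?thesis by (simp add: red_Q_def)
  qed
  define E where "E = (\<Sum>a\<in>{1..N}. \<Sum>b\<in>{1..N}. expect K \<epsilon> a b)"
  have Efin: "E < \<infinity>" unfolding E_def using assms(8) eps by (simp add: condC_def)
  have Ele: "expect K \<epsilon> a b \<le> E" if a: "a \<in> {1..N}" and b: "b \<in> {1..N}" for a b
  proof -
    have "expect K \<epsilon> a b \<le> (\<Sum>b\<in>{1..N}. expect K \<epsilon> a b)" by (rule member_le_sum) (use b in auto)
    also have "\<dots> \<le> E" unfolding E_def by (rule member_le_sum[of a]) (use a in auto)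
    finally show ?thesis .
  qed
  define qr where "qr = measure (K \<epsilon> r r) UNIV"
  have qr0: "0 \<le> qr" by (simp add: qr_def)
  have qr1: "qr < 1"
  proof -
    obtain Y where Ysub: "\<forall>i\<in>{1..N}. Y i \<subseteq> {1..N}"
      and Ypos: "\<forall>\<epsilon>\<in>{0<..\<epsilon>0}. \<forall>i\<in>{1..N}. \<forall>j\<in>{1..N}.
        (j \<in> Y i \<longrightarrow> trans_prob K \<epsilon> i j > 0) \<and> (j \<notin> Y i \<longrightarrow> trans_prob K \<epsilon> i j = 0)"
      and Ypath: "\<forall>i\<in>{1..N}. \<forall>j\<in>{1..N}. \<exists>n\<ge>1. \<exists>l :: nat \<Rightarrow> nat.
        l 0 = i \<and> l n = j \<and> (\<forall>k<n. l (Suc k) \<in> Y (l k))"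
      using assms(6) unfolding condA_def by blast
    obtain n l where l0: "l 0 = r" and ln: "l n = j" and lY: "\<forall>k<n. l (Suc k) \<in> Y (l k)"
      using Ypath rN j by blast
    have "\<exists>k<n. l k = r \<and> l (Suc k) \<noteq> r"
    proof (rule ccontr)
      assume H: "\<not> (\<exists>k<n. l k = r \<and> l (Suc k) \<noteq> r)"
      have "k \<le> n \<Longrightarrow> l k = r" for k by (induction k) (use H l0 in auto)
      then show False using ln j by auto
    qed
    then obtain k where k: "k < n" "l k = r" "l (Suc k) \<noteq> r" by blast
    define b where "b = l (Suc k)"
    have bY: "b \<in> Y r" using lY k b_def by auto
    have bN: "b \<in> {1..N}" using bY Ysub rN by blast
    have bpos: "measure (K \<epsilon> r b) UNIV > 0"
      using Ypos eps rN bN bY by (auto simp: trans_prob_def)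
    have "(\<Sum>c\<in>{r, b}. measure (K \<epsilon> r c) UNIV) \<le> (\<Sum>c\<in>{1..N}. measure (K \<epsilon> r c) UNIV)"
      by (rule sum_mono2) (use rN bN in auto)
    then have "qr + measure (K \<epsilon> r b) UNIV \<le> 1" using rowsum[OF rN] k b_def by (simp add: qr_def)
    then show ?thesis using bpos by simp
  qed
  have termb: "(\<integral>\<^sup>+x. ennreal (\<Sum>k\<in>{1..Suc m}. x k) \<partial>taboo_law K \<epsilon> r i j (Suc m))
      \<le> of_nat (Suc m) * (E * ennreal (qr ^ (m - 2)))" for m
  proof -
    define n where "n = Suc m"
    let ?P = "PiM {1..n} (M n)"
    have meas: "(\<lambda>x. ennreal (x k)) \<in> borel_measurable ?P" if k: "k \<in> {1..n}" for k
    proof -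
      have "(\<lambda>x. x k) \<in> measurable ?P (M n k)" by (rule measurable_component_singleton) (use k in simp)
      then have "(\<lambda>x. x k) \<in> borel_measurable ?P" using Mk measurable_cong_sets by blast
      then show ?thesis using measurable_ennreal measurable_compose by blast
    qed
    have "(\<integral>\<^sup>+x. ennreal (\<Sum>k\<in>{1..n}. x k) \<partial>?P) \<le> (\<integral>\<^sup>+x. (\<Sum>k\<in>{1..n}. ennreal (x k)) \<partial>?P)"
      by (intro nn_integral_mono ennreal_sum_le) simp
    also have "\<dots> = (\<Sum>k\<in>{1..n}. \<integral>\<^sup>+x. ennreal (x k) \<partial>?P)"
      by (rule nn_integral_sum) (use meas in auto)
    also have "\<dots> \<le> of_nat (card {1..n}) * (E * ennreal (qr ^ (m - 2)))"
    proof (rule sum_bounded_above)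
      fix k assume k: "k \<in> {1..n}"
      have "(\<integral>\<^sup>+x. ennreal (x k) \<partial>?P) = integral\<^sup>N (M n k) ennreal * (\<Prod>l\<in>{1..n}-{k}. emeasure (M n l) UNIV)"
        using PiM_component_integral[OF ps _ k] Mk by simp
      also have "\<dots> \<le> E * ennreal (qr ^ (m - 2))"
      proof (rule mult_mono)
        show "integral\<^sup>N (M n k) ennreal \<le> E"
          unfolding M_def using Ele pathN by (simp add: expect_def)
        define A where "A = {2..<n} - {k}"
        have AB: "A \<subseteq> {1..n} - {k}" by (auto simp: A_def)
        have "(\<Prod>l\<in>{1..n}-{k}. emeasure (M n l) UNIV) =
           (\<Prod>l\<in>{1..n}-{k}-A. emeasure (M n l) UNIV) * (\<Prod>l\<in>A. emeasure (M n l) UNIV)"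
          by (rule prod.subset_diff[OF AB]) simp
        also have "\<dots> \<le> 1 * (\<Prod>l\<in>A. emeasure (M n l) UNIV)"
          by (rule mult_right_mono) (auto intro!: prod_le_1 simp: Mem)
        also have "(\<Prod>l\<in>A. emeasure (M n l) UNIV) = (\<Prod>l\<in>A. ennreal qr)"
        proof (rule prod.cong[OF refl])
          fix l assume l: "l \<in> A"
          then have "M n l = K \<epsilon> r r" by (auto simp: A_def M_def taboo_path_def)
          then show "emeasure (M n l) UNIV = ennreal qr" using emeq rN by (simp add: qr_def)
        qed
        also have "\<dots> = ennreal (qr ^ card A)" by (simp add: ennreal_power qr0)
        also have "\<dots> \<le> ennreal (qr ^ (m - 2))"
        proof (rule ennreal_leI, rule power_decreasing)
          have "card A \<ge> card {2..<n} - 1" unfolding A_def by (auto simp: card_Diff_singleton_if)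
          then show "m - 2 \<le> card A" by (simp add: n_def)
        qed (use qr0 qr1 in auto)
        finally show "(\<Prod>l\<in>{1..n}-{k}. emeasure (M n l) UNIV) \<le> ennreal (qr ^ (m - 2))" by simp
      qed auto
      finally show "(\<integral>\<^sup>+x. ennreal (x k) \<partial>?P) \<le> E * ennreal (qr ^ (m - 2))" .
    qed
    finally show ?thesis by (simp add: law n_def)
  qed
  define g where "g m = real (Suc m) * qr ^ (m - 2)" for m
  have g0: "0 \<le> g m" for m using qr0 by (simp add: g_def)
  have gs: "summable g"
  proof -
    have s1: "summable (\<lambda>m. diffs (\<lambda>_. 1::real) m * qr ^ m)"
      by (rule termdiff_converges[of qr 1]) (use qr0 qr1 in auto)
    have s2: "summable (\<lambda>m. real (Suc m) * qr ^ m)" using s1 by (simp add: diffs_def)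
    have "summable (\<lambda>m. g (m + 2))"
    proof (rule summable_comparison_test[OF _ summable_mult[OF s2, of 3]])
      show "\<exists>N. \<forall>n\<ge>N. norm (g (n + 2)) \<le> 3 * (real (Suc n) * qr ^ n)"
      proof (intro exI allI impI)
        fix n :: nat
        have "real (Suc (n + 2)) * qr ^ n \<le> (3 * real (Suc n)) * qr ^ n"
          by (rule mult_right_mono) (use qr0 in auto)
        then show "norm (g (n + 2)) \<le> 3 * (real (Suc n) * qr ^ n)" using qr0 by (simp add: g_def algebra_simps)
      qed
    qed
    then show ?thesis using summable_iff_shift[of g 2] by simp
  qed
  have "red_e K r \<epsilon> i j \<le> (\<Sum>m. E * ennreal (g m))"
    unfolding red_e_def
  proof (rule suminf_le[OF _ summableI summableI])
    fix m
    have "of_nat (Suc m) * (E * ennreal (qr ^ (m - 2))) = E * ennreal (g m)"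
      using qr0 by (simp add: g_def ennreal_mult ennreal_of_nat_eq_real_of_nat mult.left_commute)
    then show "(\<integral>\<^sup>+x. ennreal (\<Sum>k\<in>{1..Suc m}. x k) \<partial>taboo_law K \<epsilon> r i j (Suc m)) \<le> E * ennreal (g m)"
      using termb[of m] by simp
  qed
  also have "\<dots> = E * ennreal (suminf g)" using suminf_ennreal2[OF g0 gs] by simp
  also have "\<dots> < \<infinity>" using Efin by (simp add: ennreal_mult_less_top)
  finally show "red_Q K r \<epsilon> i j 0 = 0 \<and> red_e K r \<epsilon> i j < \<infinity>" using Q0 by simp
qed

end
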